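(* Fix $\lambda\in[0,1)$ and $p\in[0,1]$. Let $\mathbf{v}^1(\cdot)$ and $\mathbf{v}^2(\cdot)$ be solutions to the fluid model (with initial conditions in $\overline{\mathcal{V}}^\infty$), and let $\mathbf{s}^k_i(t)=\mathbf{v}^k_i(t)-\mathbf{v}^k_{i+1}(t)$ for $i\ge0$, $k=1,2$. If $\mathbf{s}^1_i(0)\ge\mathbf{s}^2_i(0)$ for all $i\ge0$, then $\mathbf{s}^1_i(t)\ge\mathbf{s}^2_i(t)$ for all $i\ge0$ and all $t\ge0$.
   Context: $\mathcal{S}=\{\mathbf{s}\in[0,1]^{\mathbb{Z}_+}:1=\mathbf{s}_0\ge\mathbf{s}_1\ge\cdots\ge0\}$, $\overline{\mathcal{S}}^\infty=\{\mathbf{s}\in\mathcal{S}:\sum_{i\ge1}\mathbf{s}_i<\infty\}$, $\overline{\mathcal{V}}^\infty=\{\mathbf{v}:\mathbf{v}_i=\sum_{j\ge i}\mathbf{s}_j\ \forall i,\text{ for some }\mathbf{s}\in\overline{\mathcal{S}}^\infty\}$. $g_i(\mathbf{v})=p$ if $\mathbf{v}_i>0$, $=\min\{\lambda\mathbf{v}_{i-1},p\}$ if $\mathbf{v}_i=0<\mathbf{v}_{i-1}$, $=0$ if $\mathbf{v}_i=\mathbf{v}_{i-1}=0$. A solution to the fluid model with initial condition $\mathbf{v}^0$ is $\mathbf{v}:[0,\infty)\to\overline{\mathcal{V}}^\infty$ with (0) all coordinates $L$-Lipschitz for a common $L$; (1) $\mathbf{v}(0)=\mathbf{v}^0$; (2)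 for all $t$, $\mathbf{v}_0-\mathbf{v}_1=1$ and $1\ge\mathbf{v}_i-\mathbf{v}_{i+1}\ge\mathbf{v}_{i+1}-\mathbf{v}_{i+2}\ge0$, $i\ge0$; (3) for a.e. $t$ and all $i\ge1$, $\dot{\mathbf{v}}_i=\lambda(\mathbf{v}_{i-1}-\mathbf{v}_i)-(1-p)(\mathbf{v}_i-\mathbf{v}_{i+1})-g_i(\mathbf{v})$. *)

theory Defs
  imports "HOL-Analysis.Analysis"
begin

definition S_set :: "(nat \<Rightarrow> real) set" where
  "S_set = {s. (\<forall>i. 0 \<le> s i \<and> s i \<le> 1) \<and> s 0 = 1 \<and> (\<forall>i. s (Suc i) \<le> s i)}"

definition S_bar_inf :: "(nat \<Rightarrow> real) set" where
  "S_bar_inf = {s \<in> S_set. summable (\<lambda>i. s (Suc i))}"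

definition V_bar_inf :: "(nat \<Rightarrow> real) set" where
  "V_bar_inf = {v. \<exists>s \<in> S_bar_inf. \<forall>i. v i = (\<Sum>j. s (i + j))}"

definition g_fun :: "real \<Rightarrow> real \<Rightarrow> (nat \<Rightarrow> real) \<Rightarrow> nat \<Rightarrow> real" where
  "g_fun lam p v i =
     (if v i > 0 then p
      else if v (i - 1) > 0 then min (lam * v (i - 1)) p
      else 0)"

definition fluid_solution ::
  "real \<Rightarrow> real \<Rightarrow> (nat \<Rightarrow> real) \<Rightarrow> (real \<Rightarrow> nat \<Rightarrow> real) \<Rightarrow> bool" where
  "fluid_solution lam p v0 v \<longleftrightarrow>
     (\<forall>t\<ge>0. v t \<in> V_bar_inf)
   \<and> (\<exists>L. \<forall>i. \<forall>t\<ge>0. \<forall>u\<ge>0. \<bar>v t i - v u i\<bar> \<le> L * \<bar>t - u\<bar>)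
   \<and> v 0 = v0
   \<and> (\<forall>t\<ge>0. v t 0 - v t 1 = 1 \<and>
        (\<forall>i. 1 \<ge> v t i - v t (i+1) \<and> v t i - v t (i+1) \<ge> v t (i+1) - v t (i+2)
             \<and> v t (i+1) - v t (i+2) \<ge> 0))
   \<and> (\<exists>N \<in> null_sets lborel. \<forall>t\<ge>0. t \<notin> N \<longrightarrow>
        (\<forall>i\<ge>1. ((\<lambda>u. v u i) has_real_derivative
            (lam * (v t (i-1) - v t i) - (1 - p) * (v t i - v t (i+1)) - g_fun lam p (v t) i))
           (at t)))"

end

theory Submission
  imports Defs
begin

lemma mono_lemma:
  fixes g :: "real \<Rightarrow> real"
  assumes ab: "a \<le> b"
    and lip: "B-lipschitz_on {a..b} g"
    and N: "N \<in> null_sets lborel"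
    and good: "\<And>t e. t \<in> {a..<b} \<Longrightarrow> t \<notin> N \<Longrightarrow> e > 0 \<Longrightarrow> \<exists>s\<in>{t<..b}. g s \<le> g t + e*(s-t)"
  shows "g b \<le> g a"
proof (rule ccontr)
  assume "\<not> g b \<le> g a"
  hence gt: "g a < g b" by simp
  with ab have ab': "a < b" by (cases "a = b") auto
  define e where "e = (g b - g a)/(2*(b-a))"
  have e0: "e > 0" unfolding e_def using gt ab' by auto
  define h where "h t = g t - e*(t-a)" for t
  have ha: "h a = g a" unfolding h_def by simp
  have hb: "h b = g b - (g b - g a)/2" unfolding h_def e_def using ab' by (simp add: field_simps)
  have hab: "h a < h b" unfolding ha hb using gt by (simp add: field_simps)
  have B0: "0 \<le> B" using lip lipschitz_on_nonneg by blast
  have lipg: "\<And>x y. x\<in>{a..b} \<Longrightarrow> y\<in>{a..b} \<Longrightarrow> \<bar>g x - g y\<bar> \<le> B*\<bar>x-y\<bar>"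
    using lip unfolding lipschitz_on_def dist_real_def by blast
  have lh: "\<bar>h x - h y\<bar> \<le> (B+e)*\<bar>x-y\<bar>" if "x\<in>{a..b}" "y\<in>{a..b}" for x y
  proof -
    have "\<bar>h x - h y\<bar> = \<bar>(g x - g y) - e*(x-y)\<bar>" unfolding h_def by (simp add: algebra_simps)
    also have "\<dots> \<le> \<bar>g x - g y\<bar> + e*\<bar>x-y\<bar>" using e0 abs_triangle_ineq4[of "g x - g y" "e*(x-y)"] by (simp add: abs_mult)
    also have "\<dots> \<le> (B+e)*\<bar>x-y\<bar>" using lipg[OF that] by (simp add: algebra_simps)
    finally show ?thesis .
  qed
  have hlip: "(B+e)-lipschitz_on {a..b} h"
    using lh B0 e0 unfolding lipschitz_on_def dist_real_def by auto
  have hcont: "continuous_on {a..b} h" using lipschitz_on_continuous_on[OF hlip] .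
  have sub: "{h a<..<h b} \<subseteq> h ` (N \<inter> {a..b})"
  proof
    fix y assume y: "y \<in> {h a<..<h b}"
    define S where "S = {t\<in>{a..b}. h t = y}"
    have Sne: "S \<noteq> {}"
      using IVT'[of h a y b, OF _ _ ab hcont] y unfolding S_def by auto
    have Sbdd: "bdd_above S" unfolding S_def by (auto intro: bdd_aboveI[of _ b])
    have Scl: "closed S"
    proof -
      have "S = {a..b} \<inter> h -` {y}" unfolding S_def by auto
      thus ?thesis using continuous_closed_preimage[OF hcont] closed_atLeastAtMost
        by (metis closed_singleton)
    qed
    define \<tau> where "\<tau> = Sup S"
    have tS: "\<tau> \<in> S" unfolding \<tau>_def using closed_contains_Sup[OF Sne Sbdd Scl] .
    have tle: "\<And>t. t \<in> S \<Longrightarrow> t \<le> \<tau>" unfolding \<tau>_def using Sbdd by (simp add: cSup_upper)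
    have tb: "\<tau> < b" using tS y unfolding S_def by (cases "\<tau> = b") auto
    have after: "h s > y" if s: "s \<in> {\<tau><..b}" for s
    proof (rule ccontr)
      assume "\<not> h s > y"
      hence "h s \<le> y" by simp
      moreover have "y \<le> h b" using y by simp
      moreover have "s \<le> b" using s by simp
      moreover have "continuous_on {s..b} h"
        using hcont by (rule continuous_on_subset) (use tS s in \<open>auto simp: S_def\<close>)
      ultimately obtain z where z: "s \<le> z" "z \<le> b" "h z = y"
        using IVT'[of h s y b] by blast
      hence "z \<in> S" using tS s unfolding S_def by auto
      hence "z \<le> \<tau>" by (rule tle)
      thus False using z s by simp
    qed
    have "\<tau> \<in> N"
    proof (rule ccontr)
      assume "\<tau> \<notin> N"
      moreover have "\<tau> \<in> {a..<b}" using tS tb unfolding S_def by auto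
      ultimately obtain s where s: "s \<in> {\<tau><..b}" "g s \<le> g \<tau> + e*(s-\<tau>)"
        using good e0 by blast
      hence "h s \<le> h \<tau>" unfolding h_def by (simp add: algebra_simps)
      moreover have "h \<tau> = y" using tS unfolding S_def by simp
      ultimately show False using after[OF s(1)] by simp
    qed
    thus "y \<in> h ` (N \<inter> {a..b})" using tS unfolding S_def by auto
  qed
  have negN: "negligible (N \<inter> {a..b})"
  proof -
    have "N \<in> null_sets lebesgue" using N null_sets_completionI by blast
    hence "negligible N" by (simp add: negligible_iff_null_sets)
    thus ?thesis using negligible_subset by blast
  qed
  have "negligible (h ` (N \<inter> {a..b}))"
  proof (rule negligible_locally_Lipschitz_image[OF _ negN])
    show "DIM(real) \<le> DIM(real)" by simp
    fix x assume x: "x \<in> N \<inter> {a..b}"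
    show "\<exists>T B. open T \<and> x \<in> T \<and> (\<forall>y\<in>N \<inter> {a..b} \<inter> T. norm (h y - h x) \<le> B * norm (y - x))"
      using lh x by (intro exI[of _ UNIV] exI[of _ "B+e"]) auto
  qed
  hence "negligible {h a<..<h b}" using sub negligible_subset by blast
  hence "box (h a) (h b) = {}" using negligible_interval(2)[of "h a" "h b"] by (simp only: box_real)
  thus False using hab by (simp add: box_real)
qed



lemma step_a: fixes lam p A B C D :: real
  assumes "0 \<le> lam" "0 \<le> p" "p \<le> 1" "0 \<le> B" "0 \<le> D" "B \<le> D" "C \<le> A" "B \<le> A" "D \<le> C"
  shows "lam*(C-A) - (1-p)*(D-B) - ((if D>0 then p else min (lam*C) p) - (if B>0 then p else min (lam*A) p)) \<le> 0"
proof (cases "D > 0")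
  case True
  have "(1-p)*(D-B) \<ge> 0" using assms by simp
  moreover have "lam*(C-A) \<le> 0" using assms by (simp add: mult_nonneg_nonpos)
  moreover have "(if B>0 then p else min (lam*A) p) \<le> p" by auto
  ultimately show ?thesis using True by auto
next
  case False
  hence "D = 0" "B = 0" using assms by auto
  moreover have "lam*C \<le> lam*A" using assms by (simp add: mult_left_mono)
  ultimately show ?thesis by (auto simp: min_def right_diff_distrib)
qed

lemma step_b: fixes lam p A B C D :: real
  assumes "0 \<le> lam" "0 \<le> p" "p \<le> 1" "0 \<le> B" "0 \<le> D" "D \<le> B" "A \<le> C" "B \<le> A" "D \<le> C"
  shows "lam*(C-A) - (1-p)*(D-B) - ((if D>0 then p else min (lam*C) p) - (if B>0 then p else min (lam*A) p)) \<ge> 0"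
proof (cases "B > 0")
  case True
  have "(1-p)*(D-B) \<le> 0" using assms by (simp add: mult_nonneg_nonpos)
  moreover have "lam*(C-A) \<ge> 0" using assms by simp
  moreover have "(if D>0 then p else min (lam*C) p) \<le> p" by auto
  ultimately show ?thesis using True by auto
next
  case False
  hence "D = 0" "B = 0" using assms by auto
  moreover have "lam*C \<ge> lam*A" using assms by (simp add: mult_left_mono)
  ultimately show ?thesis by (auto simp: min_def right_diff_distrib)
qed

definition gg :: "real \<Rightarrow> real \<Rightarrow> (nat \<Rightarrow> real) \<Rightarrow> nat \<Rightarrow> real" where
  "gg lam p s i = (if s i > 0 then p else min (lam * s (i-1)) p)"
definition dd :: "real \<Rightarrow> real \<Rightarrow> (nat \<Rightarrow> real) \<Rightarrow> nat \<Rightarrow> real" where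
  "dd lam p s i = lam * s (i-1) - (1-p) * s i - gg lam p s i"
definition aa :: "(nat \<Rightarrow> real) \<Rightarrow> (nat \<Rightarrow> real) \<Rightarrow> nat \<Rightarrow> real" where
  "aa x x' i = (if i = 0 then 0 else if x i > 0 then 1 else if x i < 0 then 0 else if x' i > 0 then 1 else 0)"
definition adm :: "(nat \<Rightarrow> real) \<Rightarrow> bool" where
  "adm s \<longleftrightarrow> s 0 = 1 \<and> (\<forall>i. 0 \<le> s i) \<and> (\<forall>i. s (Suc i) \<le> s i)"

lemma aa_cases: "aa x x' i = 0 \<or> aa x x' i = 1"
  unfolding aa_def by auto

lemma aa_1: "aa x x' i = 1 \<Longrightarrow> x i \<ge> 0"
  unfolding aa_def by (auto split: if_splits)

lemma aa_0: "aa x x' i = 0 \<Longrightarrow> x 0 = 0 \<Longrightarrow> x i \<le> 0"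
  unfolding aa_def by (auto split: if_splits)

lemma core:
  assumes lp: "0 \<le> lam" "0 \<le> p" "p \<le> 1" and a1: "adm s1" and a2: "adm s2"
  defines "x \<equiv> \<lambda>i. s2 i - s1 i"
    and "x' \<equiv> \<lambda>i. (dd lam p s2 i - dd lam p s2 (Suc i)) - (dd lam p s1 i - dd lam p s1 (Suc i))"
  shows "(\<Sum>i\<in>{1..n}. aa x x' i * x' i) \<le> - aa x x' n * (dd lam p s2 (Suc n) - dd lam p s1 (Suc n))"
proof (induction n)
  case 0
  then show ?case by (simp add: aa_def)
next
  case (Suc n)
  have x0: "x 0 = 0" using a1 a2 unfolding x_def adm_def by simp
  let ?Y = "\<lambda>j. dd lam p s2 j - dd lam p s1 j"
  have x'eq: "x' (Suc n) = ?Y (Suc n) - ?Y (Suc (Suc n))" unfolding x'_def by simp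
  have key: "(aa x x' (Suc n) - aa x x' n) * ?Y (Suc n) \<le> 0"
  proof -
    have Yeq: "?Y (Suc n) = lam*(s2 n - s1 n) - (1-p)*(s2 (Suc n) - s1 (Suc n))
       - ((if s2 (Suc n)>0 then p else min (lam * s2 n) p) - (if s1 (Suc n)>0 then p else min (lam * s1 n) p))"
      unfolding dd_def gg_def by (simp add: algebra_simps)
    have s: "0 \<le> s1 (Suc n)" "0 \<le> s2 (Suc n)" "s1 (Suc n) \<le> s1 n" "s2 (Suc n) \<le> s2 n"
      using a1 a2 unfolding adm_def by auto
    consider "aa x x' (Suc n) = aa x x' n" | "aa x x' (Suc n) = 1" "aa x x' n = 0"
      | "aa x x' (Suc n) = 0" "aa x x' n = 1"
      using aa_cases[of x x' n] aa_cases[of x x' "Suc n"] by fastforce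
    then show ?thesis
    proof cases
      case 1 then show ?thesis by simp
    next
      case 2
      have "x (Suc n) \<ge> 0" using aa_1[OF 2(1)] .
      moreover have "x n \<le> 0" using aa_0[OF 2(2) x0] .
      ultimately have "?Y (Suc n) \<le> 0" unfolding Yeq
        by (intro step_a) (use lp s in \<open>auto simp: x_def\<close>)
      then show ?thesis using 2 by simp
    next
      case 3
      have "x (Suc n) \<le> 0" using aa_0[OF 3(1) x0] .
      moreover have "x n \<ge> 0" using aa_1[OF 3(2)] .
      ultimately have "?Y (Suc n) \<ge> 0" unfolding Yeq
        by (intro step_b) (use lp s in \<open>auto simp: x_def\<close>)
      then show ?thesis using 3 by simp
    qed
  qed
  have "(\<Sum>i\<in>{1..Suc n}. aa x x' i * x' i) = (\<Sum>i\<in>{1..n}. aa x x' i * x' i) + aa x x' (Suc n) * x' (Suc n)"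
    by simp
  also have "\<dots> \<le> - aa x x' n * ?Y (Suc n) + aa x x' (Suc n) * (?Y (Suc n) - ?Y (Suc (Suc n)))"
    using Suc.IH x'eq by simp
  also have "\<dots> = (aa x x' (Suc n) - aa x x' n) * ?Y (Suc n) - aa x x' (Suc n) * ?Y (Suc (Suc n))"
    by (simp add: algebra_simps)
  also have "\<dots> \<le> - aa x x' (Suc n) * ?Y (Suc (Suc n))" using key by simp
  finally show ?case .
qed

lemma core_final:
  assumes lp: "0 \<le> lam" "0 \<le> p" "p \<le> 1" and a1: "adm s1" and a2: "adm s2"
  defines "x \<equiv> \<lambda>i. s2 i - s1 i"
    and "x' \<equiv> \<lambda>i. (dd lam p s2 i - dd lam p s2 (Suc i)) - (dd lam p s1 i - dd lam p s1 (Suc i))"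
  shows "(\<Sum>i\<in>{1..n}. aa x x' i * x' i) + dd lam p s2 (Suc n) \<le> lam * s1 n"
proof -
  have c: "(\<Sum>i\<in>{1..n}. aa x x' i * x' i) \<le> - aa x x' n * (dd lam p s2 (Suc n) - dd lam p s1 (Suc n))"
    using core[OF lp a1 a2] unfolding x_def x'_def .
  have x0: "x 0 = 0" using a1 a2 unfolding x_def adm_def by simp
  have gg0: "gg lam p s (Suc n) \<ge> 0" if "adm s" for s
    using that lp unfolding gg_def adm_def by auto
  have ddle: "dd lam p s (Suc n) \<le> lam * s n" if "adm s" for s
  proof -
    have "0 \<le> (1-p) * s (Suc n)" using that lp unfolding adm_def by simp
    thus ?thesis using gg0[OF that] unfolding dd_def by simp
  qed
  consider "aa x x' n = 0" | "aa x x' n = 1" using aa_cases by blast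
  then show ?thesis
  proof cases
    case 1
    hence "x n \<le> 0" using aa_0 x0 by blast
    hence "lam * s2 n \<le> lam * s1 n" using lp unfolding x_def by (simp add: mult_left_mono)
    then show ?thesis using c 1 ddle[OF a2] by simp
  next
    case 2
    then show ?thesis using c ddle[OF a1] by simp
  qed
qed


lemma Vbar_rep:
  assumes "v \<in> V_bar_inf"
  obtains \<sigma> where "\<forall>i. 0 \<le> \<sigma> i" "\<forall>i. \<sigma> (Suc i) \<le> \<sigma> i" "summable \<sigma>"
    "\<forall>i. v i = (\<Sum>j. \<sigma> (j + i))" "\<forall>i. \<sigma> i = v i - v (Suc i)"
proof -
  obtain \<sigma> where s: "\<sigma> \<in> S_bar_inf" and v: "\<forall>i. v i = (\<Sum>j. \<sigma> (i + j))"
    using assms unfolding V_bar_inf_def by blast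
  have nn: "\<forall>i. 0 \<le> \<sigma> i" "\<forall>i. \<sigma> (Suc i) \<le> \<sigma> i"
    using s unfolding S_bar_inf_def S_set_def by auto
  have sm: "summable \<sigma>" using s unfolding S_bar_inf_def by (simp add: summable_Suc_iff)
  have v': "\<forall>i. v i = (\<Sum>j. \<sigma> (j + i))" using v by (simp add: add.commute)
  have "\<sigma> i = v i - v (Suc i)" for i
  proof -
    have sm': "summable (\<lambda>j. \<sigma> (j + i))" using summable_ignore_initial_segment[OF sm] .
    have "(\<Sum>j. \<sigma> (Suc j + i)) = (\<Sum>j. \<sigma> (j + i)) - \<sigma> (0 + i)"
      using suminf_split_head[OF sm'] by simp
    moreover have "(\<Sum>j. \<sigma> (Suc j + i)) = v (Suc i)" using v' by simp
    ultimately show ?thesis using v' by simp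
  qed
  then show ?thesis using that nn sm v' by blast
qed

lemma Vbar_nonneg: assumes "v \<in> V_bar_inf" shows "0 \<le> v i"
proof -
  obtain \<sigma> where s: "\<forall>i. 0 \<le> \<sigma> i" "\<forall>i. \<sigma> (Suc i) \<le> \<sigma> i" "summable \<sigma>"
    "\<forall>i. v i = (\<Sum>j. \<sigma> (j + i))" "\<forall>i. \<sigma> i = v i - v (Suc i)"
    using Vbar_rep[OF assms] by blast
  have "0 \<le> (\<Sum>j. \<sigma> (j + i))"
    by (rule suminf_nonneg[OF summable_ignore_initial_segment[OF s(3)]]) (use s(1) in blast)
  thus ?thesis using spec[OF s(4), of i] by linarith
qed

lemma Vbar_pos:
  assumes "v \<in> V_bar_inf"
  shows "0 < v i \<longleftrightarrow> 0 < v i - v (Suc i)"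
proof
  assume "0 < v i - v (Suc i)" thus "0 < v i" using Vbar_nonneg[OF assms, of "Suc i"] by simp
next
  assume vp: "0 < v i"
  obtain \<sigma> where s: "\<forall>i. 0 \<le> \<sigma> i" "\<forall>i. \<sigma> (Suc i) \<le> \<sigma> i" "summable \<sigma>"
    "\<forall>i. v i = (\<Sum>j. \<sigma> (j + i))" "\<forall>i. \<sigma> i = v i - v (Suc i)"
    using Vbar_rep[OF assms] by blast
  show "0 < v i - v (Suc i)"
  proof (rule ccontr)
    assume "\<not> 0 < v i - v (Suc i)"
    hence "\<sigma> i \<le> 0" using spec[OF s(5), of i] by linarith
    hence z: "\<sigma> i = 0" using spec[OF s(1), of i] by linarith
    have "\<sigma> (j + i) = 0" for j
    proof -
      have "\<sigma> (j + i) \<le> \<sigma> i" using lift_Suc_antimono_le[of \<sigma> i "j+i"] s(2) by simp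
      thus ?thesis using z spec[OF s(1), of "j+i"] by linarith
    qed
    hence "v i = 0" using s(4) by simp
    thus False using vp by simp
  qed
qed

lemma Vbar_tail:
  assumes "v \<in> V_bar_inf"
  shows "(\<lambda>i. v i) \<longlonglongrightarrow> 0"
proof -
  obtain \<sigma> where s0: "\<forall>i. 0 \<le> \<sigma> i" "\<forall>i. \<sigma> (Suc i) \<le> \<sigma> i" "summable \<sigma>"
    "\<forall>i. v i = (\<Sum>j. \<sigma> (j + i))" "\<forall>i. \<sigma> i = v i - v (Suc i)"
    using Vbar_rep[OF assms] by blast
  note s = s0(3) s0(4)
  show ?thesis
  proof (rule LIMSEQ_I)
    fix r :: real assume "0 < r"
    then obtain N where "\<forall>n\<ge>N. norm (\<Sum>i. \<sigma> (i + n)) < r" using suminf_exist_split[OF _ s(1)] by blast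
    thus "\<exists>no. \<forall>n\<ge>no. norm (v n - 0) < r" using s(2) by auto
  qed
qed

lemma g_fun_eq:
  assumes "v \<in> V_bar_inf" "1 \<le> i" "0 \<le> p"
  shows "g_fun lam p v i = gg lam p (\<lambda>j. v j - v (Suc j)) i"
proof -
  have vi: "0 \<le> v i" "0 \<le> v (i-1)" using Vbar_nonneg[OF assms(1)] by auto
  have si: "i - 1 + 1 = i" "Suc (i - 1) = i" using assms(2) by auto
  show ?thesis
  proof (cases "0 < v i")
    case True
    thus ?thesis using Vbar_pos[OF assms(1)] unfolding g_fun_def gg_def by simp
  next
    case False
    hence v0: "v i = 0" using vi by simp
    hence ns: "\<not> 0 < v i - v (Suc i)" using Vbar_pos[OF assms(1), of i] by simp
    have "v (i - 1) - v (Suc (i - 1)) = v (i-1)" using v0 si by simp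
    thus ?thesis using False ns vi assms(3) unfolding g_fun_def gg_def by (auto simp: min_def)
  qed
qed

lemma rq:
  assumes "(f has_real_derivative f') (at t)"
  shows "((\<lambda>s. (f s - f t)/(s - t)) \<longlongrightarrow> f') (at_right t)"
  using has_field_derivative_at_within[OF assms, of "{t<..}"] unfolding has_field_derivative_iff .

lemma rq_pos:
  assumes d: "(f has_real_derivative f') (at t)"
  shows "((\<lambda>s. (max (f s) 0 - max (f t) 0)/(s - t)) \<longlongrightarrow>
           (if f t > 0 then f' else if f t < 0 then 0 else max f' 0)) (at_right t)"
proof -
  have q: "((\<lambda>s. (f s - f t)/(s - t)) \<longlongrightarrow> f') (at_right t)" using rq[OF d] .
  have c: "(f \<longlongrightarrow> f t) (at_right t)"
    using DERIV_isCont[OF d] by (simp add: isCont_def filterlim_at_split)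
  consider "f t > 0" | "f t < 0" | "f t = 0" by linarith
  then show ?thesis
  proof cases
    case 1
    have "eventually (\<lambda>s. f s > 0) (at_right t)" using order_tendstoD(1)[OF c 1] .
    hence "eventually (\<lambda>s. (f s - f t)/(s - t) = (max (f s) 0 - max (f t) 0)/(s - t)) (at_right t)"
      by eventually_elim (use 1 in auto)
    from tendsto_cong[OF this] q 1 show ?thesis by simp
  next
    case 2
    have "eventually (\<lambda>s. f s < 0) (at_right t)" using order_tendstoD(2)[OF c 2] .
    hence ev2: "eventually (\<lambda>s. 0 = (max (f s) 0 - max (f t) 0)/(s - t)) (at_right t)"
      by eventually_elim (use 2 in auto)
    have L: "((\<lambda>s. 0::real) \<longlongrightarrow> 0) (at_right t)" by (rule tendsto_const)
    show ?thesis using iffD1[OF tendsto_cong[OF ev2] L] 2 by simp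
  next
    case 3
    have "eventually (\<lambda>s. t < s) (at_right t)" by (rule eventually_at_right_less)
    hence ev3: "eventually (\<lambda>s. max ((f s - f t)/(s - t)) 0 = (max (f s) 0 - max (f t) 0)/(s - t)) (at_right t)"
    proof eventually_elim
      case (elim s)
      hence st: "s - t > 0" by simp
      show ?case
      proof (cases "f s \<ge> 0")
        case True
        hence "f s / (s - t) \<ge> 0" using st by simp
        thus ?thesis using True 3 by (simp add: max_absorb1)
      next
        case False
        hence "f s / (s - t) < 0" using st by (simp add: divide_neg_pos)
        thus ?thesis using False 3 by (simp add: max_absorb2)
      qed
    qed
    have M: "((\<lambda>s. max ((f s - f t)/(s - t)) 0) \<longlongrightarrow> max f' 0) (at_right t)"
      by (rule tendsto_max[OF q tendsto_const])
    have e: "(if f t > 0 then f' else if f t < 0 then 0 else max f' 0) = max f' 0" using 3 by simp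
    show ?thesis unfolding e using iffD1[OF tendsto_cong[OF ev3] M] .
  qed
qed


lemma sol_facts:
  assumes sol: "fluid_solution lam p v0 v" and p0: "0 \<le> p"
  obtains N L where "N \<in> null_sets lborel"
   "\<And>i t u. 0 \<le> t \<Longrightarrow> 0 \<le> u \<Longrightarrow> \<bar>v t i - v u i\<bar> \<le> L * \<bar>t - u\<bar>"
   "\<And>t. 0 \<le> t \<Longrightarrow> adm (\<lambda>i. v t i - v t (Suc i))"
   "\<And>t i. 0 \<le> t \<Longrightarrow> 0 \<le> v t i"
   "(\<lambda>i. v 0 i) \<longlonglongrightarrow> 0"
   "\<And>t i. 0 \<le> t \<Longrightarrow> t \<notin> N \<Longrightarrow> 1 \<le> i \<Longrightarrow>
      ((\<lambda>u. v u i) has_real_derivative dd lam p (\<lambda>j. v t j - v t (Suc j)) i) (at t)"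
proof -
  have V: "\<forall>t\<ge>0. v t \<in> V_bar_inf" using sol unfolding fluid_solution_def by blast
  obtain L where L: "\<forall>i. \<forall>t\<ge>0. \<forall>u\<ge>0. \<bar>v t i - v u i\<bar> \<le> L * \<bar>t - u\<bar>"
    using sol unfolding fluid_solution_def by blast
  have st: "\<forall>t\<ge>0. v t 0 - v t 1 = 1 \<and>
        (\<forall>i. 1 \<ge> v t i - v t (i+1) \<and> v t i - v t (i+1) \<ge> v t (i+1) - v t (i+2)
             \<and> v t (i+1) - v t (i+2) \<ge> 0)"
    using sol unfolding fluid_solution_def by blast
  obtain N where N: "N \<in> null_sets lborel" and D: "\<forall>t\<ge>0. t \<notin> N \<longrightarrow>
        (\<forall>i\<ge>1. ((\<lambda>u. v u i) has_real_derivative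
            (lam * (v t (i-1) - v t i) - (1 - p) * (v t i - v t (i+1)) - g_fun lam p (v t) i))
           (at t))"
    using sol unfolding fluid_solution_def by blast
  have adm: "adm (\<lambda>i. v t i - v t (Suc i))" if t: "0 \<le> t" for t
  proof -
    have a: "v t 0 - v t (Suc 0) = 1" using st t by simp
    have b: "v t (Suc i) - v t (Suc (Suc i)) \<le> v t i - v t (Suc i)" for i
      using st t by (simp add: numeral_2_eq_2)
    have c: "0 \<le> v t (Suc i) - v t (Suc (Suc i))" for i
      using st t by (simp add: numeral_2_eq_2)
    have d: "0 \<le> v t i - v t (Suc i)" for i
      using a c by (cases i) auto
    show ?thesis unfolding adm_def using a b d by blast
  qed
  have nn: "0 \<le> v t i" if "0 \<le> t" for t i using Vbar_nonneg V that by blast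
  have tl: "(\<lambda>i. v 0 i) \<longlonglongrightarrow> 0" using Vbar_tail V by blast
  have der: "((\<lambda>u. v u i) has_real_derivative dd lam p (\<lambda>j. v t j - v t (Suc j)) i) (at t)"
    if "0 \<le> t" "t \<notin> N" "1 \<le> i" for t i
  proof -
    have "((\<lambda>u. v u i) has_real_derivative
            (lam * (v t (i-1) - v t i) - (1 - p) * (v t i - v t (i+1)) - g_fun lam p (v t) i)) (at t)"
      using D that by blast
    moreover have "g_fun lam p (v t) i = gg lam p (\<lambda>j. v t j - v t (Suc j)) i"
      using g_fun_eq V that p0 by blast
    moreover have "Suc (i - 1) = i" using that by simp
    ultimately show ?thesis unfolding dd_def by simp
  qed
  show ?thesis
    by (rule that[OF N _ adm nn tl der]) (use L in auto)
qed

lemma max0_lip: "\<bar>max (a::real) 0 - max b 0\<bar> \<le> \<bar>a - b\<bar>"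
  by (auto simp: max_def)

lemma telescope: "(\<Sum>j\<in>{1..n}. (f j - f (Suc j))) = f 1 - (f (Suc n) :: real)"
  by (induction n) auto

lemma adm_n_bound:
  assumes "adm s"
  shows "real n * s n \<le> (\<Sum>j\<in>{1..n}. s j)"
proof -
  have "s n \<le> s j" if "j \<in> {1..n}" for j
    using lift_Suc_antimono_le[of s j n] assms that unfolding adm_def by auto
  hence "(\<Sum>j\<in>{1..n}. s n) \<le> (\<Sum>j\<in>{1..n}. s j)" by (rule sum_mono)
  thus ?thesis by simp
qed




lemma abs4: "\<bar>((a::real) - b) - (c - d) - ((a' - b') - (c' - d'))\<bar> \<le> \<bar>a - a'\<bar> + \<bar>b - b'\<bar> + \<bar>c - c'\<bar> + \<bar>d - d'\<bar>"
  by linarith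

lemma abs3: "\<bar>((a::real) + b - c) - (a' + b' - c')\<bar> \<le> \<bar>a - a'\<bar> + \<bar>b - b'\<bar> + \<bar>c - c'\<bar>"
  by linarith

lemma abs_L: "\<bar>x\<bar> \<le> (L::real) * \<bar>y\<bar> \<Longrightarrow> \<bar>x\<bar> \<le> \<bar>L\<bar> * \<bar>y\<bar>"
  by (meson abs_ge_self abs_ge_zero mult_right_mono order_trans)

theorem lemma3:
  fixes lam p :: real and v1 v2 :: "real \<Rightarrow> nat \<Rightarrow> real" and v01 v02 :: "nat \<Rightarrow> real"
  assumes "0 \<le> lam" "lam < 1" "0 \<le> p" "p \<le> 1"
    and "v01 \<in> V_bar_inf" "v02 \<in> V_bar_inf"
    and "fluid_solution lam p v01 v1" "fluid_solution lam p v02 v2"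
    and "\<forall>i. v1 0 i - v1 0 (i+1) \<ge> v2 0 i - v2 0 (i+1)"
  shows "\<forall>t\<ge>0. \<forall>i. v1 t i - v1 t (i+1) \<ge> v2 t i - v2 t (i+1)"
proof -
  obtain L1 N1 where N1: "N1 \<in> null_sets lborel"
   and L1: "\<And>i t u. 0 \<le> t \<Longrightarrow> 0 \<le> u \<Longrightarrow> \<bar>v1 t i - v1 u i\<bar> \<le> L1 * \<bar>t - u\<bar>"
   and adm1: "\<And>t. 0 \<le> t \<Longrightarrow> adm (\<lambda>i. v1 t i - v1 t (Suc i))"
   and nn1: "\<And>t i. 0 \<le> t \<Longrightarrow> 0 \<le> v1 t i"
   and tl1: "(\<lambda>i. v1 0 i) \<longlonglongrightarrow> 0"
   and D1: "\<And>t i. 0 \<le> t \<Longrightarrow> t \<notin> N1 \<Longrightarrow> 1 \<le> i \<Longrightarrow>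
      ((\<lambda>u. v1 u i) has_real_derivative dd lam p (\<lambda>j. v1 t j - v1 t (Suc j)) i) (at t)"
    by (rule sol_facts[OF assms(7) assms(3)]) (rule that)
  obtain L2 N2 where N2: "N2 \<in> null_sets lborel"
   and L2: "\<And>i t u. 0 \<le> t \<Longrightarrow> 0 \<le> u \<Longrightarrow> \<bar>v2 t i - v2 u i\<bar> \<le> L2 * \<bar>t - u\<bar>"
   and adm2: "\<And>t. 0 \<le> t \<Longrightarrow> adm (\<lambda>i. v2 t i - v2 t (Suc i))"
   and nn2: "\<And>t i. 0 \<le> t \<Longrightarrow> 0 \<le> v2 t i"
   and tl2: "(\<lambda>i. v2 0 i) \<longlonglongrightarrow> 0"
   and D2: "\<And>t i. 0 \<le> t \<Longrightarrow> t \<notin> N2 \<Longrightarrow> 1 \<le> i \<Longrightarrow>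
      ((\<lambda>u. v2 u i) has_real_derivative dd lam p (\<lambda>j. v2 t j - v2 t (Suc j)) i) (at t)"
    by (rule sol_facts[OF assms(8) assms(3)]) (rule that)
  have N12: "N1 \<union> N2 \<in> null_sets lborel" using N1 N2 by (rule null_sets.Un)
  define X where "X j u = (v2 u j - v2 u (Suc j)) - (v1 u j - v1 u (Suc j))" for j u
  have L1': "\<bar>v1 t i - v1 u i\<bar> \<le> \<bar>L1\<bar> * \<bar>t - u\<bar>" if "0 \<le> t" "0 \<le> u" for i t u
    using L1[OF that, of i] by (rule abs_L)
  have L2': "\<bar>v2 t i - v2 u i\<bar> \<le> \<bar>L2\<bar> * \<bar>t - u\<bar>" if "0 \<le> t" "0 \<le> u" for i t u
    using L2[OF that, of i] by (rule abs_L)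
  have lipX: "\<bar>X j u - X j w\<bar> \<le> (2*\<bar>L1\<bar> + 2*\<bar>L2\<bar>)*\<bar>u - w\<bar>" if "0 \<le> u" "0 \<le> w" for j u w
  proof -
    have "\<bar>X j u - X j w\<bar> \<le> \<bar>v2 u j - v2 w j\<bar> + \<bar>v2 u (Suc j) - v2 w (Suc j)\<bar>
        + \<bar>v1 u j - v1 w j\<bar> + \<bar>v1 u (Suc j) - v1 w (Suc j)\<bar>"
      unfolding X_def by (rule abs4)
    also have "\<dots> \<le> (2*\<bar>L1\<bar> + 2*\<bar>L2\<bar>)*\<bar>u - w\<bar>"
      using L1'[OF that, of j] L1'[OF that, of "Suc j"] L2'[OF that, of j] L2'[OF that, of "Suc j"]
      by (simp add: algebra_simps)
    finally show ?thesis .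
  qed
  have X0: "X j 0 \<le> 0" for j using assms(9) unfolding X_def by simp
  have main: "X i T \<le> 0" if T: "0 \<le> T" for T i
  proof (cases "i = 0")
    case True
    have "v1 T 0 - v1 T (Suc 0) = 1" using adm1[OF T] unfolding adm_def by blast
    moreover have "v2 T 0 - v2 T (Suc 0) = 1" using adm2[OF T] unfolding adm_def by blast
    ultimately show ?thesis using True unfolding X_def by simp
  next
    case False
    define C where "C = v1 0 1 + \<bar>L1\<bar> * T"
    have bound: "max (X i T) 0 \<le> v2 0 (Suc n) + C * T / real n" if n: "i \<le> n" for n
    proof -
      have n1: "1 \<le> n" using n False by simp
      define \<Psi> where "\<Psi> u = (\<Sum>j\<in>{1..n}. max (X j u) 0) + v2 u (Suc n)" for u
      define c where "c = C / real n"
      define g where "g u = \<Psi> u - c * u" for u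
      define K where "K = real n * (2*\<bar>L1\<bar> + 2*\<bar>L2\<bar>) + \<bar>L2\<bar> + \<bar>c\<bar>"
      have lipg: "K-lipschitz_on {0..T} g"
        unfolding lipschitz_on_def
      proof (intro conjI ballI)
        show "0 \<le> K" unfolding K_def by simp
        fix x y assume xy: "x \<in> {0..T}" "y \<in> {0..T}"
        hence xy0: "0 \<le> x" "0 \<le> y" by auto
        have "\<bar>(\<Sum>j\<in>{1..n}. max (X j x) 0) - (\<Sum>j\<in>{1..n}. max (X j y) 0)\<bar>
              \<le> (\<Sum>j\<in>{1..n}. \<bar>max (X j x) 0 - max (X j y) 0\<bar>)"
          unfolding sum_subtractf[symmetric] by (rule sum_abs)
        also have "\<dots> \<le> (\<Sum>j\<in>{1..n}. (2*\<bar>L1\<bar> + 2*\<bar>L2\<bar>)*\<bar>x - y\<bar>)"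
        proof (rule sum_mono)
          fix j assume "j \<in> {1..n}"
          show "\<bar>max (X j x) 0 - max (X j y) 0\<bar> \<le> (2*\<bar>L1\<bar> + 2*\<bar>L2\<bar>)*\<bar>x - y\<bar>"
            using max0_lip[of "X j x" "X j y"] lipX[OF xy0, of j] by linarith
        qed
        also have "\<dots> = real n * ((2*\<bar>L1\<bar> + 2*\<bar>L2\<bar>)*\<bar>x - y\<bar>)" by simp
        finally have s: "\<bar>(\<Sum>j\<in>{1..n}. max (X j x) 0) - (\<Sum>j\<in>{1..n}. max (X j y) 0)\<bar>
              \<le> real n * ((2*\<bar>L1\<bar> + 2*\<bar>L2\<bar>)*\<bar>x - y\<bar>)" .
        have v: "\<bar>v2 x (Suc n) - v2 y (Suc n)\<bar> \<le> \<bar>L2\<bar> * \<bar>x - y\<bar>" using L2'[OF xy0] .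
        have cc: "\<bar>c * x - c * y\<bar> = \<bar>c\<bar> * \<bar>x - y\<bar>" by (metis abs_mult right_diff_distrib)
        have "\<bar>g x - g y\<bar> \<le> real n * ((2*\<bar>L1\<bar> + 2*\<bar>L2\<bar>)*\<bar>x - y\<bar>) + \<bar>L2\<bar> * \<bar>x - y\<bar> + \<bar>c\<bar> * \<bar>x - y\<bar>"
        proof -
          have "\<bar>g x - g y\<bar> \<le> \<bar>(\<Sum>j\<in>{1..n}. max (X j x) 0) - (\<Sum>j\<in>{1..n}. max (X j y) 0)\<bar>
             + \<bar>v2 x (Suc n) - v2 y (Suc n)\<bar> + \<bar>c * x - c * y\<bar>"
            unfolding g_def \<Psi>_def by (rule abs3)
          thus ?thesis using s v cc by linarith
        qed
        thus "dist (g x) (g y) \<le> K * dist x y"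
          unfolding dist_real_def K_def by (simp add: algebra_simps)
      qed
      have good: "\<exists>s\<in>{t<..T}. g s \<le> g t + e*(s-t)"
        if t: "t \<in> {0..<T}" "t \<notin> N1 \<union> N2" and e: "e > 0" for t e
      proof -
        have t0: "0 \<le> t" and tT: "t < T" using t by auto
        define s1 where "s1 = (\<lambda>j. v1 t j - v1 t (Suc j))"
        define s2 where "s2 = (\<lambda>j. v2 t j - v2 t (Suc j))"
        define x where "x = (\<lambda>j. s2 j - s1 j)"
        define x' where "x' = (\<lambda>j. (dd lam p s2 j - dd lam p s2 (Suc j)) - (dd lam p s1 j - dd lam p s1 (Suc j)))"
        have a1: "adm s1" unfolding s1_def using adm1[OF t0] .
        have a2: "adm s2" unfolding s2_def using adm2[OF t0] .
        have dX: "((\<lambda>u. X j u) has_real_derivative x' j) (at t)" if "1 \<le> j" for j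
          unfolding X_def x'_def s1_def s2_def
          using that t0 t(2) by (intro DERIV_diff D1 D2) auto
        have xX: "x j = X j t" for j unfolding x_def X_def s1_def s2_def by simp
        define r where "r j = aa x x' j * x' j" for j
        have QX: "((\<lambda>s. (max (X j s) 0 - max (X j t) 0)/(s - t)) \<longlongrightarrow> r j) (at_right t)"
          if "j \<in> {1..n}" for j
        proof -
          have "r j = (if X j t > 0 then x' j else if X j t < 0 then 0 else max (x' j) 0)"
            using that unfolding r_def aa_def xX by auto
          thus ?thesis using rq_pos[OF dX] that by simp
        qed
        have Qv: "((\<lambda>s. (v2 s (Suc n) - v2 t (Suc n))/(s - t)) \<longlongrightarrow> dd lam p s2 (Suc n)) (at_right t)"
          unfolding s2_def by (rule rq[OF D2[OF t0]]) (use t(2) in auto)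
        define R where "R = (\<Sum>j\<in>{1..n}. r j) + dd lam p s2 (Suc n)"
        have QP: "((\<lambda>s. (\<Sum>j\<in>{1..n}. (max (X j s) 0 - max (X j t) 0)/(s - t))
                     + (v2 s (Suc n) - v2 t (Suc n))/(s - t)) \<longlongrightarrow> R) (at_right t)"
          unfolding R_def by (intro tendsto_add tendsto_sum QX Qv)
        have eqQ: "(\<Sum>j\<in>{1..n}. (max (X j s) 0 - max (X j t) 0)/(s - t))
                     + (v2 s (Suc n) - v2 t (Suc n))/(s - t) - c = (g s - g t)/(s - t)"
          if "s \<noteq> t" for s
        proof -
          have "(g s - g t)/(s - t) = (\<Psi> s - \<Psi> t)/(s - t) - c"
            unfolding g_def using that by (simp add: field_simps)
          also have "(\<Psi> s - \<Psi> t) = (\<Sum>j\<in>{1..n}. (max (X j s) 0 - max (X j t) 0))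
                     + (v2 s (Suc n) - v2 t (Suc n))"
            unfolding \<Psi>_def by (simp add: sum_subtractf)
          finally show ?thesis by (simp add: add_divide_distrib sum_divide_distrib)
        qed
        have Qg: "((\<lambda>s. (g s - g t)/(s - t)) \<longlongrightarrow> R - c) (at_right t)"
        proof -
          have "eventually (\<lambda>s. s \<noteq> t) (at_right t)"
            using eventually_at_right_less[of t] by eventually_elim auto
          hence "eventually (\<lambda>s. (\<Sum>j\<in>{1..n}. (max (X j s) 0 - max (X j t) 0)/(s - t))
                     + (v2 s (Suc n) - v2 t (Suc n))/(s - t) - c = (g s - g t)/(s - t)) (at_right t)"
            by eventually_elim (rule eqQ)
          from iffD1[OF tendsto_cong[OF this] tendsto_diff[OF QP tendsto_const[of c]]]
          show ?thesis .
        qed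
        have Rle: "R \<le> lam * s1 n"
        proof -
          have "R = (\<Sum>j\<in>{1..n}. aa x x' j * x' j) + dd lam p s2 (Suc n)"
            unfolding R_def r_def by simp
          thus ?thesis using core_final[OF assms(1,3,4) a1 a2, of n] unfolding x_def x'_def by simp
        qed
        have s1n: "real n * s1 n \<le> C"
        proof -
          have "real n * s1 n \<le> (\<Sum>j\<in>{1..n}. s1 j)" by (rule adm_n_bound[OF a1])
          also have "\<dots> = v1 t 1 - v1 t (Suc n)" unfolding s1_def by (rule telescope)
          also have "\<dots> \<le> v1 t 1" using nn1[OF t0] by simp
          also have "\<dots> \<le> v1 0 1 + \<bar>L1\<bar> * T"
          proof -
            have "\<bar>v1 t 1 - v1 0 1\<bar> \<le> \<bar>L1\<bar> * \<bar>t - 0\<bar>" using L1'[OF t0, of 0 1] by simp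
            moreover have "\<bar>L1\<bar> * \<bar>t - 0\<bar> \<le> \<bar>L1\<bar> * T" using t0 tT by (simp add: mult_left_mono)
            ultimately show ?thesis by linarith
          qed
          finally show ?thesis unfolding C_def .
        qed
        have Rc: "R - c \<le> 0"
        proof -
          have s1n0: "0 \<le> s1 n" using a1 unfolding adm_def by simp
          have "lam * s1 n \<le> s1 n" using mult_right_mono[of lam 1 "s1 n"] assms(2) s1n0 by simp
          moreover have "s1 n \<le> c" unfolding c_def using s1n n1 by (simp add: field_simps)
          ultimately show ?thesis using Rle by linarith
        qed
        have ev: "eventually (\<lambda>s. (g s - g t)/(s - t) < e \<and> t < s \<and> s < T) (at_right t)"
        proof (intro eventually_conj)
          show "eventually (\<lambda>s. (g s - g t)/(s - t) < e) (at_right t)"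
            using order_tendstoD(2)[OF Qg] Rc e by simp
          show "eventually (\<lambda>s. t < s) (at_right t)" by (rule eventually_at_right_less)
          have "((\<lambda>s. s) \<longlongrightarrow> t) (at_right t)" by (rule tendsto_ident_at)
          thus "eventually (\<lambda>s. s < T) (at_right t)" using order_tendstoD(2) tT by blast
        qed
        obtain s where s: "(g s - g t)/(s - t) < e" "t < s" "s < T"
          using eventually_happens'[OF _ ev] trivial_limit_at_right_real unfolding trivial_limit_def by blast
        have "g s - g t < e * (s - t)" using s by (simp add: pos_divide_less_eq)
        thus ?thesis using s by (intro bexI[of _ s]) auto
      qed
      have gT: "g T \<le> g 0" by (rule mono_lemma[OF T lipg N12 good]) auto
      have P0: "\<Psi> 0 = v2 0 (Suc n)" unfolding \<Psi>_def using X0 by (simp add: max_absorb2)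
      have "max (X i T) 0 \<le> (\<Sum>j\<in>{1..n}. max (X j T) 0)"
        by (rule member_le_sum) (use n1 n False in auto)
      also have "\<dots> \<le> \<Psi> T" unfolding \<Psi>_def using nn2[OF T] by simp
      also have "\<dots> = g T + c * T" unfolding g_def by simp
      also have "\<dots> \<le> g 0 + c * T" using gT by simp
      also have "\<dots> = v2 0 (Suc n) + C * T / real n" unfolding g_def P0 c_def by simp
      finally show ?thesis .
    qed
    show ?thesis
    proof (rule ccontr)
      assume "\<not> X i T \<le> 0"
      hence pos: "X i T > 0" by simp
      have lim: "(\<lambda>n. v2 0 (Suc n) + C * T / real n) \<longlonglongrightarrow> 0 + 0"
        by (intro tendsto_add LIMSEQ_Suc[OF tl2] lim_const_over_n)
      have e1: "eventually (\<lambda>n. v2 0 (Suc n) + C * T / real n < X i T) sequentially"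
        using order_tendstoD(2)[OF lim] pos by simp
      have e2: "eventually (\<lambda>n. i \<le> n) sequentially" by (rule eventually_ge_at_top)
      obtain N where NN: "\<forall>n\<ge>N. v2 0 (Suc n) + C * T / real n < X i T \<and> i \<le> n"
        using eventually_conj[OF e1 e2] unfolding eventually_sequentially by blast
      obtain n where "v2 0 (Suc n) + C * T / real n < X i T" "i \<le> n"
        using NN by blast
      thus False using bound[of n] by simp
    qed
  qed
  show ?thesis using main unfolding X_def by simp
qed

end
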